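(* Let $n\ge2$ and let $U^+$ be the subalgebra of $U_{r,s}(\mathfrak{so}_{2n+1})$ generated by $e_1,\dots,e_n$, with root vectors $\mathcal E_{i,j},\mathcal E_{i,j'}$ as in the context. Then in $U^+$: (1) $\mathcal E_{i,j}\mathcal E_{k,l}=\mathcal E_{k,l}\mathcal E_{i,j}$ for $i\le j$, $j+1<k\le l\le n$; (2) $\mathcal E_{i,j}\mathcal E_{k,l'}=\mathcal E_{k,l'}\mathcal E_{i,j}$ for $i\le j$, $j+1<k<l\le n$; (3) $\mathcal E_{i,j}=\mathcal E_{i,l-1}\mathcal E_{l,j}-r^2\mathcal E_{l,j}\mathcal E_{i,l-1}$ for $i<l\le j\le n$; (4) $\mathcal E_{i,j'}=\mathcal E_{i,l-1}\mathcal E_{l,j'}-r^2\mathcal E_{l,j'}\mathcal E_{i,l-1}$ for $i<l<j\le n$.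
   Context: Let $r,s\in\mathbb C^*$ with $r^3\ne s^3$, $r^4\ne s^4$, $\mathbb K=\mathbb Q(r,s)$. $U_{r,s}(\mathfrak{so}_{2n+1})$ is the $\mathbb K$-algebra generated by $e_i,f_i,\omega_i^{\pm1},\omega_i'^{\pm1}$ ($1\le i\le n$) with: $\omega$'s commute, invertible; $\omega_je_i\omega_j^{-1}=\langle\omega_i',\omega_j\rangle e_i$, $\omega_jf_i\omega_j^{-1}=\langle\omega_i',\omega_j\rangle^{-1}f_i$, $\omega_j'e_i\omega_j'^{-1}=\langle\omega_j',\omega_i\rangle^{-1}e_i$, $\omega_j'f_i\omega_j'^{-1}=\langle\omega_j',\omega_i\rangle f_i$, where $\langle\omega_i',\omega_i\rangle=r^2s^{-2}$ ($i<n$), $\langle\omega_n',\omega_n\rangle=rs^{-1}$, $\langle\omega_i',\omega_{i+1}\rangle=r^{-2}$, $\langle\omega_{i+1}',\omega_i\rangle=s^2$ ($i<n$), others $1$; $e_if_j-f_je_i=\delta_{ij}(\omega_i-\omega_i')/(r_i-s_i)$ ($r_i=r^2,s_i=s^2$ for $i<n$; $r_n=r,s_n=s$); Serre relations $(\mathrm{ad}_le_i)^{1-a_{ij}}(e_j)=0=(\mathrm{ad}_rf_i)^{1-a_{ij}}(f_j)$, $i\ne j$, with $(a_{ij})$ the $B_n$ Cartan matrix ($a_{ii}=2$, $a_{i,i+1}=a_{i+1,i}=-1$ for $i\le n-2$, $a_{n-1,n}=-1$, $a_{n,n-1}=-2$, else $0$), $\mathrm{ad}_l(a)(b)=\sum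 a_{(1)}bS(a_{(2)})$, $\mathrm{ad}_r(a)(b)=\sum S(a_{(1)})ba_{(2)}$, for the Hopf structure $\Delta(\omega)=\omega\otimes\omega$, $\Delta(e_i)=e_i\otimes1+\omega_i\otimes e_i$, $\Delta(f_i)=1\otimes f_i+f_i\otimes\omega_i'$, $S(e_i)=-\omega_i^{-1}e_i$, $S(f_i)=-f_i\omega_i'^{-1}$. (In $U^+$ the Serre relations amount to: $e_ie_j=e_je_i$ for $|i-j|>1$, $e_i\mathcal E_{i,i+1}=s^2\mathcal E_{i,i+1}e_i$ for $i<n$, $\mathcal E_{j,j+1}e_{j+1}=s^2e_{j+1}\mathcal E_{j,j+1}$ for $j<n-1$, $\mathcal E_{n-1,n'}e_n=s^2e_n\mathcal E_{n-1,n'}$.) Root vectors: $\mathcal E_{i,i}=e_i$, $\mathcal E_{i,j}=e_i\mathcal E_{i+1,j}-r^2\mathcal E_{i+1,j}e_i$ ($1\le i<j\le n$), $\mathcal E_{i,n'}=\mathcal E_{i,n}e_n-rs\,e_n\mathcal E_{i,n}$ ($i\le n-1$), $\mathcal E_{i,j'}=\mathcal E_{i,(j+1)'}e_j-s^{-2}e_j\mathcal E_{i,(j+1)'}$ ($1\le i<j\le n-1$). *)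

theory Defs
  imports Complex_Main
begin

text \<open>Noncommutative polynomials in generators indexed by nat (words = nat lists),
  coefficients in complex (containing K = Q(r,s)).  Elements are coefficient functions.\<close>

type_synonym ncpoly = "nat list \<Rightarrow> complex"

definition np_add :: "ncpoly \<Rightarrow> ncpoly \<Rightarrow> ncpoly" (infixl "\<oplus>" 65) where
  "p \<oplus> q = (\<lambda>w. p w + q w)"

definition np_smult :: "complex \<Rightarrow> ncpoly \<Rightarrow> ncpoly" (infixr "\<cdot>" 75) where
  "c \<cdot> p = (\<lambda>w. c * p w)"

definition np_minus :: "ncpoly \<Rightarrow> ncpoly \<Rightarrow> ncpoly" (infixl "\<ominus>" 65) where
  "p \<ominus> q = (\<lambda>w. p w - q w)"

definition np_mult :: "ncpoly \<Rightarrow> ncpoly \<Rightarrow> ncpoly" (infixl "\<otimes>" 70) where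
  "p \<otimes> q = (\<lambda>w. \<Sum>k\<le>length w. p (take k w) * q (drop k w))"

definition np_word :: "nat list \<Rightarrow> ncpoly" where
  "np_word u = (\<lambda>w. if w = u then 1 else 0)"

definition np_zero :: ncpoly where "np_zero = (\<lambda>w. 0)"

definition gen :: "nat \<Rightarrow> ncpoly" where "gen i = np_word [i]"

text \<open>Eaux r j d = E_{j-d,j}; recursion E_{i,j} = e_i E_{i+1,j} - r^2 E_{i+1,j} e_i.\<close>
primrec Eaux :: "complex \<Rightarrow> nat \<Rightarrow> nat \<Rightarrow> ncpoly" where
  "Eaux r j 0 = gen j"
| "Eaux r j (Suc d) = (gen (j - Suc d) \<otimes> Eaux r j d) \<ominus> ((r^2) \<cdot> (Eaux r j d \<otimes> gen (j - Suc d)))"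

definition rootE :: "complex \<Rightarrow> nat \<Rightarrow> nat \<Rightarrow> ncpoly" where
  "rootE r i j = Eaux r j (j - i)"

text \<open>Epaux r s n i d = E_{i,(n-d)'};
  E_{i,n'} = E_{i,n} e_n - r s e_n E_{i,n},
  E_{i,j'} = E_{i,(j+1)'} e_j - s^{-2} e_j E_{i,(j+1)'}.\<close>
primrec Epaux :: "complex \<Rightarrow> complex \<Rightarrow> nat \<Rightarrow> nat \<Rightarrow> nat \<Rightarrow> ncpoly" where
  "Epaux r s n i 0 = (rootE r i n \<otimes> gen n) \<ominus> ((r * s) \<cdot> (gen n \<otimes> rootE r i n))"
| "Epaux r s n i (Suc d) = (Epaux r s n i d \<otimes> gen (n - Suc d))
      \<ominus> ((inverse (s^2)) \<cdot> (gen (n - Suc d) \<otimes> Epaux r s n i d))"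

definition rootEp :: "complex \<Rightarrow> complex \<Rightarrow> nat \<Rightarrow> nat \<Rightarrow> nat \<Rightarrow> ncpoly" where
  "rootEp r s n i j = Epaux r s n i (n - j)"

definition serre_rels :: "complex \<Rightarrow> complex \<Rightarrow> nat \<Rightarrow> ncpoly set" where
  "serre_rels r s n =
     {(gen i \<otimes> gen j) \<ominus> (gen j \<otimes> gen i) | i j. 1 \<le> i \<and> i \<le> n \<and> 1 \<le> j \<and> j \<le> n \<and> (i + 1 < j \<or> j + 1 < i)}
   \<union> {(gen i \<otimes> rootE r i (i+1)) \<ominus> ((s^2) \<cdot> (rootE r i (i+1) \<otimes> gen i)) | i. 1 \<le> i \<and> i < n}
   \<union> {(rootE r j (j+1) \<otimes> gen (j+1)) \<ominus> ((s^2) \<cdot> (gen (j+1) \<otimes> rootE r j (j+1))) | j. 1 \<le> j \<and> j + 1 < n}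
   \<union> {(rootEp r s n (n-1) n \<otimes> gen n) \<ominus> ((s^2) \<cdot> (gen n \<otimes> rootEp r s n (n-1) n))}"

inductive_set serre_ideal :: "complex \<Rightarrow> complex \<Rightarrow> nat \<Rightarrow> ncpoly set"
  for r s :: complex and n :: nat where
  rel: "x \<in> serre_rels r s n \<Longrightarrow> (np_word u \<otimes> x) \<otimes> np_word v \<in> serre_ideal r s n"
| zero: "np_zero \<in> serre_ideal r s n"
| add: "a \<in> serre_ideal r s n \<Longrightarrow> b \<in> serre_ideal r s n \<Longrightarrow> a \<oplus> b \<in> serre_ideal r s n"
| smult: "a \<in> serre_ideal r s n \<Longrightarrow> c \<cdot> a \<in> serre_ideal r s n"

definition eqU :: "complex \<Rightarrow> complex \<Rightarrow> nat \<Rightarrow> ncpoly \<Rightarrow> ncpoly \<Rightarrow> bool" where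
  "eqU r s n a b \<longleftrightarrow> a \<ominus> b \<in> serre_ideal r s n"

end

theory Submission imports Defs begin

lemma mult_Nil: "(p \<otimes> q) [] = p [] * q []" by (simp add: np_mult_def)

lemma mult_Cons: "(p \<otimes> q) (a#w) = p [] * q (a#w) + ((\<lambda>u. p (a#u)) \<otimes> q) w"
  unfolding np_mult_def by (simp only: length_Cons sum.atMost_Suc_shift) simp

lemma mult_lin_left: "((\<lambda>u. c * f u + g u) \<otimes> t) w = c * (f \<otimes> t) w + (g \<otimes> t) w"
  unfolding np_mult_def by (simp add: sum.distrib sum_distrib_left algebra_simps)

lemma mult_assoc_pt: "((p \<otimes> q) \<otimes> t) w = (p \<otimes> (q \<otimes> t)) w"
proof (induction w arbitrary: p)
  case Nil thus ?case by (simp add: mult_Nil)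
next
  case (Cons a w)
  show ?case
    by (simp add: mult_Cons mult_Nil mult_lin_left Cons.IH algebra_simps)
qed

lemma mult_assoc: "(p \<otimes> q) \<otimes> t = p \<otimes> (q \<otimes> t)" by (rule ext) (rule mult_assoc_pt)

lemma mult_minus_left: "(p \<ominus> q) \<otimes> t = (p \<otimes> t) \<ominus> (q \<otimes> t)"
  by (rule ext) (simp add: np_mult_def np_minus_def sum_subtractf algebra_simps)
lemma mult_minus_right: "t \<otimes> (p \<ominus> q) = (t \<otimes> p) \<ominus> (t \<otimes> q)"
  by (rule ext) (simp add: np_mult_def np_minus_def sum_subtractf algebra_simps)
lemma mult_add_left: "(p \<oplus> q) \<otimes> t = (p \<otimes> t) \<oplus> (q \<otimes> t)"
  by (rule ext) (simp add: np_mult_def np_add_def sum.distrib algebra_simps)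
lemma mult_add_right: "t \<otimes> (p \<oplus> q) = (t \<otimes> p) \<oplus> (t \<otimes> q)"
  by (rule ext) (simp add: np_mult_def np_add_def sum.distrib algebra_simps)
lemma mult_smult_left: "(c \<cdot> p) \<otimes> t = c \<cdot> (p \<otimes> t)"
  by (rule ext) (simp add: np_mult_def np_smult_def sum_distrib_left algebra_simps)
lemma mult_smult_right: "t \<otimes> (c \<cdot> p) = c \<cdot> (t \<otimes> p)"
  by (rule ext) (simp add: np_mult_def np_smult_def sum_distrib_left algebra_simps)
lemma mult_zero_left: "(\<lambda>u. 0) \<otimes> t = (\<lambda>u. 0)"
  by (rule ext) (simp add: np_mult_def)
lemma mult_zero_right: "np_zero \<otimes> t = np_zero \<and> t \<otimes> np_zero = np_zero"
  by (auto simp add: np_mult_def np_zero_def)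

lemma word_mult: "np_word u \<otimes> np_word v = np_word (u @ v)"
proof (rule ext)
  fix w
  show "(np_word u \<otimes> np_word v) w = np_word (u@v) w"
  proof (cases "w = u @ v")
    case True
    have "(np_word u \<otimes> np_word v) w = (\<Sum>k\<le>length w. if k = length u then 1 else 0)"
      unfolding np_mult_def np_word_def
    proof (rule sum.cong[OF refl])
      fix k assume k: "k \<in> {..length w}"
      show "(if take k w = u then 1 else 0) * (if drop k w = v then 1 else 0) = (if k = length u then 1 else (0::complex))"
      proof (cases "take k w = u")
        case T: True
        then have "length (take k w) = length u" by simp
        then have "k = length u" using k by auto
        then show ?thesis using True T by simp
      next
        case False
        then have "k \<noteq> length u" using True by auto
        then show ?thesis using False by simp
      qed
    qed
    also have "\<dots> = 1" using True by simp
    finally show ?thesis using True by (simp add: np_word_def)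
  next
    case False
    have "(np_word u \<otimes> np_word v) w = 0"
      unfolding np_mult_def np_word_def
    proof (rule sum.neutral, rule ballI)
      fix k
      show "(if take k w = u then 1 else 0) * (if drop k w = v then 1 else 0) = (0::complex)"
        using False append_take_drop_id[of k w] by auto
    qed
    then show ?thesis using False by (simp add: np_word_def)
  qed
qed

lemma word_Nil_left: "np_word [] \<otimes> x = x"
proof (rule ext)
  fix w show "(np_word [] \<otimes> x) w = x w"
    by (cases w) (simp_all add: mult_Nil mult_Cons np_word_def mult_zero_left)
qed

lemma word_Nil_right: "x \<otimes> np_word [] = x"
proof (rule ext)
  fix w
  have "(x \<otimes> np_word []) w = (\<Sum>k\<le>length w. if k = length w then x w else 0)"
    unfolding np_mult_def np_word_def by (rule sum.cong) auto
  then show "(x \<otimes> np_word []) w = x w" by simp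
qed


lemma I_minus: "a \<in> serre_ideal r s n \<Longrightarrow> b \<in> serre_ideal r s n \<Longrightarrow> a \<ominus> b \<in> serre_ideal r s n"
proof -
  assume a: "a \<in> serre_ideal r s n" and b: "b \<in> serre_ideal r s n"
  have "a \<ominus> b = a \<oplus> ((-1) \<cdot> b)" by (rule ext) (simp add: np_minus_def np_add_def np_smult_def)
  then show ?thesis using a b by (simp add: serre_ideal.add serre_ideal.smult)
qed

lemma I_word: "x \<in> serre_ideal r s n \<Longrightarrow> np_word u \<otimes> x \<in> serre_ideal r s n \<and> x \<otimes> np_word u \<in> serre_ideal r s n"
proof (induction rule: serre_ideal.induct)
  case (rel x u' v)
  have 1: "np_word u \<otimes> ((np_word u' \<otimes> x) \<otimes> np_word v) = (np_word (u@u') \<otimes> x) \<otimes> np_word v"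
    by (simp add: mult_assoc flip: word_mult)
  have 2: "((np_word u' \<otimes> x) \<otimes> np_word v) \<otimes> np_word u = (np_word u' \<otimes> x) \<otimes> np_word (v@u)"
    by (simp add: mult_assoc flip: word_mult)
  show ?case unfolding 1 2 using rel by (simp add: serre_ideal.rel)
next
  case zero then show ?case by (simp add: mult_zero_right serre_ideal.zero)
next
  case (add a b) then show ?case by (simp add: mult_add_left mult_add_right serre_ideal.add)
next
  case (smult a c) then show ?case by (simp add: mult_smult_left mult_smult_right serre_ideal.smult)
qed

inductive gin :: "nat set \<Rightarrow> ncpoly \<Rightarrow> bool" for S where
  g_gen: "i \<in> S \<Longrightarrow> gin S (gen i)"
| g_mult: "gin S a \<Longrightarrow> gin S b \<Longrightarrow> gin S (a \<otimes> b)"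
| g_minus: "gin S a \<Longrightarrow> gin S b \<Longrightarrow> gin S (a \<ominus> b)"
| g_smult: "gin S a \<Longrightarrow> gin S (c \<cdot> a)"

lemma gin_mono: "gin S a \<Longrightarrow> S \<subseteq> T \<Longrightarrow> gin T a"
  by (induction rule: gin.induct) (auto intro: gin.intros)

lemma I_gin: "gin S a \<Longrightarrow> x \<in> serre_ideal r s n \<Longrightarrow> a \<otimes> x \<in> serre_ideal r s n \<and> x \<otimes> a \<in> serre_ideal r s n"
proof (induction arbitrary: x rule: gin.induct)
  case (g_gen i) then show ?case by (simp add: gen_def I_word)
next
  case (g_mult a b)
  then show ?case by (simp add: mult_assoc) (metis mult_assoc)
next
  case (g_minus a b) then show ?case by (simp add: mult_minus_left mult_minus_right I_minus)
next
  case (g_smult a c) then show ?case by (simp add: mult_smult_left mult_smult_right serre_ideal.smult)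
qed

lemma eqU_refl: "eqU r s n a a"
proof -
  have "a \<ominus> a = np_zero" by (rule ext) (simp add: np_minus_def np_zero_def)
  then show ?thesis by (simp add: eqU_def serre_ideal.zero)
qed

lemma eqU_eq: "a = b \<Longrightarrow> eqU r s n a b" by (simp add: eqU_refl)

lemma eqU_sym: "eqU r s n a b \<Longrightarrow> eqU r s n b a"
proof -
  assume h: "eqU r s n a b"
  have "b \<ominus> a = (-1) \<cdot> (a \<ominus> b)" by (rule ext) (simp add: np_minus_def np_smult_def)
  then show ?thesis using h by (simp add: eqU_def serre_ideal.smult)
qed

lemma eqU_trans[trans]: "eqU r s n a b \<Longrightarrow> eqU r s n b c \<Longrightarrow> eqU r s n a c"
proof -
  assume h: "eqU r s n a b" "eqU r s n b c"
  have "a \<ominus> c = (a \<ominus> b) \<oplus> (b \<ominus> c)" by (rule ext) (simp add: np_minus_def np_add_def)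
  then show ?thesis using h by (simp add: eqU_def serre_ideal.add)
qed

lemma eqU_minus: "eqU r s n a a' \<Longrightarrow> eqU r s n b b' \<Longrightarrow> eqU r s n (a \<ominus> b) (a' \<ominus> b')"
proof -
  assume h: "eqU r s n a a'" "eqU r s n b b'"
  have "(a \<ominus> b) \<ominus> (a' \<ominus> b') = (a \<ominus> a') \<ominus> (b \<ominus> b')" by (rule ext) (simp add: np_minus_def)
  then show ?thesis using h by (simp add: eqU_def I_minus)
qed

lemma eqU_smult: "eqU r s n a b \<Longrightarrow> eqU r s n (c \<cdot> a) (c \<cdot> b)"
proof -
  assume h: "eqU r s n a b"
  have "(c \<cdot> a) \<ominus> (c \<cdot> b) = c \<cdot> (a \<ominus> b)" by (rule ext) (simp add: np_minus_def np_smult_def algebra_simps)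
  then show ?thesis using h by (simp add: eqU_def serre_ideal.smult)
qed

lemma eqU_mult_left: "gin S c \<Longrightarrow> eqU r s n a b \<Longrightarrow> eqU r s n (c \<otimes> a) (c \<otimes> b)"
  unfolding eqU_def by (simp add: I_gin flip: mult_minus_right)

lemma eqU_mult_right: "gin S c \<Longrightarrow> eqU r s n a b \<Longrightarrow> eqU r s n (a \<otimes> c) (b \<otimes> c)"
  unfolding eqU_def by (simp add: I_gin flip: mult_minus_left)

lemma brk2: "gin S g \<Longrightarrow> eqU r s n X Y \<Longrightarrow>
   eqU r s n ((g \<otimes> X) \<ominus> (p \<cdot> (X \<otimes> g))) ((g \<otimes> Y) \<ominus> (p \<cdot> (Y \<otimes> g)))"
  by (intro eqU_minus eqU_smult eqU_mult_left eqU_mult_right)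

lemma brk1: "gin S g \<Longrightarrow> eqU r s n X Y \<Longrightarrow>
   eqU r s n ((X \<otimes> g) \<ominus> (p \<cdot> (g \<otimes> X))) ((Y \<otimes> g) \<ominus> (p \<cdot> (g \<otimes> Y)))"
  by (intro eqU_minus eqU_smult eqU_mult_left eqU_mult_right)

lemma jac_eq: "((((a \<otimes> b) \<ominus> (p \<cdot> (b \<otimes> a))) \<otimes> c) \<ominus> (q \<cdot> (c \<otimes> ((a \<otimes> b) \<ominus> (p \<cdot> (b \<otimes> a))))))
   \<ominus> ((a \<otimes> ((b \<otimes> c) \<ominus> (q \<cdot> (c \<otimes> b)))) \<ominus> (p \<cdot> (((b \<otimes> c) \<ominus> (q \<cdot> (c \<otimes> b))) \<otimes> a)))
   = (q \<cdot> (((a \<otimes> c) \<ominus> (c \<otimes> a)) \<otimes> b)) \<ominus> (p \<cdot> (b \<otimes> ((a \<otimes> c) \<ominus> (c \<otimes> a))))"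
  apply (simp only: mult_minus_left mult_minus_right mult_smult_left mult_smult_right mult_assoc)
  apply (rule ext)
  apply (simp add: np_minus_def np_smult_def algebra_simps)
  done

lemma jac: "gin S b \<Longrightarrow> eqU r s n (a \<otimes> c) (c \<otimes> a) \<Longrightarrow>
  eqU r s n ((((a \<otimes> b) \<ominus> (p \<cdot> (b \<otimes> a))) \<otimes> c) \<ominus> (q \<cdot> (c \<otimes> ((a \<otimes> b) \<ominus> (p \<cdot> (b \<otimes> a))))))
   ((a \<otimes> ((b \<otimes> c) \<ominus> (q \<cdot> (c \<otimes> b)))) \<ominus> (p \<cdot> (((b \<otimes> c) \<ominus> (q \<cdot> (c \<otimes> b))) \<otimes> a)))"
  unfolding eqU_def jac_eq
  by (intro I_minus serre_ideal.smult) (simp_all add: I_gin)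

lemma comm_gin: "gin S a \<Longrightarrow> (\<forall>i\<in>S. eqU r s n (gen i \<otimes> c) (c \<otimes> gen i)) \<Longrightarrow> gin T c
  \<Longrightarrow> eqU r s n (a \<otimes> c) (c \<otimes> a)"
proof (induction rule: gin.induct)
  case (g_gen i) then show ?case by simp
next
  case (g_mult a b)
  have "eqU r s n ((a \<otimes> b) \<otimes> c) (a \<otimes> (c \<otimes> b))"
    unfolding mult_assoc using g_mult by (intro eqU_mult_left) auto
  also have "eqU r s n (a \<otimes> (c \<otimes> b)) ((c \<otimes> a) \<otimes> b)"
    unfolding mult_assoc[symmetric] using g_mult by (intro eqU_mult_right) auto
  finally show ?case by (simp add: mult_assoc)
next
  case (g_minus a b)
  then have "eqU r s n ((a \<otimes> c) \<ominus> (b \<otimes> c)) ((c \<otimes> a) \<ominus> (c \<otimes> b))" by (intro eqU_minus) auto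
  then show ?case by (simp add: mult_minus_left mult_minus_right)
next
  case (g_smult a k)
  then have "eqU r s n (k \<cdot> (a \<otimes> c)) (k \<cdot> (c \<otimes> a))" by (intro eqU_smult) auto
  then show ?case by (simp add: mult_smult_left mult_smult_right)
qed

lemma comm_sets: "gin S a \<Longrightarrow> gin T c \<Longrightarrow> (\<forall>i\<in>S. \<forall>j\<in>T. eqU r s n (gen i \<otimes> gen j) (gen j \<otimes> gen i))
  \<Longrightarrow> eqU r s n (a \<otimes> c) (c \<otimes> a)"
proof -
  assume a: "gin S a" and c: "gin T c" and h: "\<forall>i\<in>S. \<forall>j\<in>T. eqU r s n (gen i \<otimes> gen j) (gen j \<otimes> gen i)"
  have "\<forall>i\<in>S. eqU r s n (gen i \<otimes> c) (c \<otimes> gen i)"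
  proof
    fix i assume i: "i \<in> S"
    have "eqU r s n (c \<otimes> gen i) (gen i \<otimes> c)"
      using c
    proof (rule comm_gin)
      show "\<forall>j\<in>T. eqU r s n (gen j \<otimes> gen i) (gen i \<otimes> gen j)" using h i by (auto intro: eqU_sym)
      show "gin {i} (gen i)" by (rule g_gen) simp
    qed
    then show "eqU r s n (gen i \<otimes> c) (c \<otimes> gen i)" by (rule eqU_sym)
  qed
  then show ?thesis using a c by (intro comm_gin) auto
qed

lemma serre_comm: "1 \<le> i \<Longrightarrow> i \<le> n \<Longrightarrow> 1 \<le> j \<Longrightarrow> j \<le> n \<Longrightarrow> i + 1 < j \<or> j + 1 < i
  \<Longrightarrow> eqU r s n (gen i \<otimes> gen j) (gen j \<otimes> gen i)"
proof -
  assume h: "1 \<le> i" "i \<le> n" "1 \<le> j" "j \<le> n" "i + 1 < j \<or> j + 1 < i"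
  have "(gen i \<otimes> gen j) \<ominus> (gen j \<otimes> gen i) \<in> serre_rels r s n"
    unfolding serre_rels_def using h by blast
  then have "(np_word [] \<otimes> ((gen i \<otimes> gen j) \<ominus> (gen j \<otimes> gen i))) \<otimes> np_word [] \<in> serre_ideal r s n"
    by (rule serre_ideal.rel)
  then show ?thesis by (simp add: eqU_def word_Nil_left word_Nil_right)
qed

lemma gin_Eaux: "gin {j - d..j} (Eaux r j d)"
proof (induction d)
  case 0 then show ?case by (simp add: g_gen)
next
  case (Suc d)
  have m: "gin {j - Suc d..j} (Eaux r j d)" using Suc by (rule gin_mono) auto
  have g: "gin {j - Suc d..j} (gen (j - Suc d))" by (rule g_gen) auto
  show ?case using m g by (simp add: gin.intros)
qed

lemma gin_rootE: "i \<le> j \<Longrightarrow> gin {i..j} (rootE r i j)"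
  using gin_Eaux[of j "j - i" r] by (simp add: rootE_def)

lemma gin_Epaux: "i \<le> n \<Longrightarrow> d \<le> n - i \<Longrightarrow> gin {i..n} (Epaux r s n i d)"
proof (induction d)
  case 0 then show ?case by (simp add: gin.intros gin_rootE)
next
  case (Suc d)
  have m: "gin {i..n} (Epaux r s n i d)" using Suc by simp
  have g: "gin {i..n} (gen (n - Suc d))" by (rule g_gen) (use Suc in auto)
  show ?case using m g by (simp add: gin.intros)
qed

lemma rootE_same: "rootE r i i = gen i" by (simp add: rootE_def)

lemma rootE_rec: "i < j \<Longrightarrow> rootE r i j = (gen i \<otimes> rootE r (Suc i) j) \<ominus> ((r^2) \<cdot> (rootE r (Suc i) j \<otimes> gen i))"
proof -
  assume h: "i < j"
  then have e: "j - i = Suc (j - Suc i)" by simp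
  have e2: "j - Suc (j - Suc i) = i" using h by simp
  show ?thesis unfolding rootE_def e by (simp only: Eaux.simps e2)
qed


lemma part3: "l \<le> j \<Longrightarrow> j \<le> n \<Longrightarrow> 1 \<le> i \<Longrightarrow> i < l \<Longrightarrow>
  eqU r s n (rootE r i j)
    ((rootE r i (l - 1) \<otimes> rootE r l j) \<ominus> ((r^2) \<cdot> (rootE r l j \<otimes> rootE r i (l - 1))))"
proof (induction "l - Suc i" arbitrary: i)
  case 0
  then have l: "l = Suc i" by simp
  show ?case using 0 unfolding l by (simp add: rootE_same rootE_rec eqU_refl)
next
  case (Suc d)
  have IH: "eqU r s n (rootE r (Suc i) j)
    ((rootE r (Suc i) (l - 1) \<otimes> rootE r l j) \<ominus> ((r^2) \<cdot> (rootE r l j \<otimes> rootE r (Suc i) (l - 1))))"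
    using Suc by (intro Suc.hyps) auto
  have A: "rootE r i (l - 1) = (gen i \<otimes> rootE r (Suc i) (l - 1)) \<ominus> ((r^2) \<cdot> (rootE r (Suc i) (l - 1) \<otimes> gen i))"
    using Suc by (intro rootE_rec) auto
  have gi: "gin {i} (gen i)" by (rule g_gen) simp
  have gR: "gin {Suc i..l-1} (rootE r (Suc i) (l - 1))" using Suc by (intro gin_rootE) auto
  have gE: "gin {l..j} (rootE r l j)" using Suc by (intro gin_rootE) auto
  have cm: "eqU r s n (gen i \<otimes> rootE r l j) (rootE r l j \<otimes> gen i)"
    using gi gE by (rule comm_sets) (use Suc in \<open>auto intro!: serre_comm\<close>)
  have "eqU r s n (rootE r i j) ((gen i \<otimes> rootE r (Suc i) j) \<ominus> ((r^2) \<cdot> (rootE r (Suc i) j \<otimes> gen i)))"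
    using Suc by (intro eqU_eq rootE_rec) auto
  also have "eqU r s n \<dots> ((gen i \<otimes> ((rootE r (Suc i) (l - 1) \<otimes> rootE r l j) \<ominus> ((r^2) \<cdot> (rootE r l j \<otimes> rootE r (Suc i) (l - 1)))))
     \<ominus> ((r^2) \<cdot> (((rootE r (Suc i) (l - 1) \<otimes> rootE r l j) \<ominus> ((r^2) \<cdot> (rootE r l j \<otimes> rootE r (Suc i) (l - 1)))) \<otimes> gen i)))"
    by (rule brk2[OF gi IH])
  also have "eqU r s n \<dots> ((rootE r i (l - 1) \<otimes> rootE r l j) \<ominus> ((r^2) \<cdot> (rootE r l j \<otimes> rootE r i (l - 1))))"
    unfolding A by (rule eqU_sym, rule jac[OF gR cm])
  finally show ?case .
qed

lemma part4: "1 \<le> i \<Longrightarrow> i < l \<Longrightarrow> l + d < n \<Longrightarrow>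
  eqU r s n (Epaux r s n i d)
    ((rootE r i (l - 1) \<otimes> Epaux r s n l d) \<ominus> ((r^2) \<cdot> (Epaux r s n l d \<otimes> rootE r i (l - 1))))"
proof (induction d)
  case 0
  have gA: "gin {i..l-1} (rootE r i (l - 1))" using 0 by (intro gin_rootE) auto
  have gB: "gin {l..n} (rootE r l n)" using 0 by (intro gin_rootE) auto
  have gn: "gin {n} (gen n)" by (rule g_gen) simp
  have cm: "eqU r s n (rootE r i (l - 1) \<otimes> gen n) (gen n \<otimes> rootE r i (l - 1))"
    using gA gn by (rule comm_sets) (use 0 in \<open>auto intro!: serre_comm\<close>)
  have "eqU r s n (Epaux r s n i 0) ((rootE r i n \<otimes> gen n) \<ominus> ((r * s) \<cdot> (gen n \<otimes> rootE r i n)))"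
    by (simp add: eqU_refl)
  also have "eqU r s n \<dots> ((((rootE r i (l - 1) \<otimes> rootE r l n) \<ominus> ((r^2) \<cdot> (rootE r l n \<otimes> rootE r i (l - 1)))) \<otimes> gen n)
       \<ominus> ((r * s) \<cdot> (gen n \<otimes> ((rootE r i (l - 1) \<otimes> rootE r l n) \<ominus> ((r^2) \<cdot> (rootE r l n \<otimes> rootE r i (l - 1)))))))"
    using 0 by (intro brk1[OF gn] part3) auto
  also have "eqU r s n \<dots> ((rootE r i (l - 1) \<otimes> Epaux r s n l 0) \<ominus> ((r^2) \<cdot> (Epaux r s n l 0 \<otimes> rootE r i (l - 1))))"
    unfolding Epaux.simps by (rule jac[OF gB cm])
  finally show ?case .
next
  case (Suc d)
  define m where "m = n - Suc d"
  have gA: "gin {i..l-1} (rootE r i (l - 1))" using Suc by (intro gin_rootE) auto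
  have gB: "gin {l..n} (Epaux r s n l d)" using Suc by (intro gin_Epaux) auto
  have gm: "gin {m} (gen m)" by (rule g_gen) simp
  have cm: "eqU r s n (rootE r i (l - 1) \<otimes> gen m) (gen m \<otimes> rootE r i (l - 1))"
    using gA gm by (rule comm_sets) (use Suc in \<open>auto intro!: serre_comm simp: m_def\<close>)
  have IH: "eqU r s n (Epaux r s n i d)
    ((rootE r i (l - 1) \<otimes> Epaux r s n l d) \<ominus> ((r^2) \<cdot> (Epaux r s n l d \<otimes> rootE r i (l - 1))))"
    using Suc by auto
  have "eqU r s n (Epaux r s n i (Suc d)) ((Epaux r s n i d \<otimes> gen m) \<ominus> ((inverse (s^2)) \<cdot> (gen m \<otimes> Epaux r s n i d)))"
    by (simp add: eqU_refl m_def)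
  also have "eqU r s n \<dots> ((((rootE r i (l - 1) \<otimes> Epaux r s n l d) \<ominus> ((r^2) \<cdot> (Epaux r s n l d \<otimes> rootE r i (l - 1)))) \<otimes> gen m)
       \<ominus> ((inverse (s^2)) \<cdot> (gen m \<otimes> ((rootE r i (l - 1) \<otimes> Epaux r s n l d) \<ominus> ((r^2) \<cdot> (Epaux r s n l d \<otimes> rootE r i (l - 1)))))))"
    by (rule brk1[OF gm IH])
  also have "eqU r s n \<dots> ((rootE r i (l - 1) \<otimes> Epaux r s n l (Suc d)) \<ominus> ((r^2) \<cdot> (Epaux r s n l (Suc d) \<otimes> rootE r i (l - 1))))"
    unfolding Epaux.simps m_def[symmetric] by (rule jac[OF gB cm])
  finally show ?case .
qed

theorem lemma3p1:
  fixes r s :: complex and n :: nat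
  assumes "r \<noteq> 0" and "s \<noteq> 0" and "r^3 \<noteq> s^3" and "r^4 \<noteq> s^4" and "n \<ge> 2"
  shows "(\<forall>i j k l. 1 \<le> i \<and> i \<le> j \<and> j + 1 < k \<and> k \<le> l \<and> l \<le> n \<longrightarrow>
            eqU r s n (rootE r i j \<otimes> rootE r k l) (rootE r k l \<otimes> rootE r i j))
       \<and> (\<forall>i j k l. 1 \<le> i \<and> i \<le> j \<and> j + 1 < k \<and> k < l \<and> l \<le> n \<longrightarrow>
            eqU r s n (rootE r i j \<otimes> rootEp r s n k l) (rootEp r s n k l \<otimes> rootE r i j))
       \<and> (\<forall>i l j. 1 \<le> i \<and> i < l \<and> l \<le> j \<and> j \<le> n \<longrightarrow>
            eqU r s n (rootE r i j)
              ((rootE r i (l - 1) \<otimes> rootE r l j) \<ominus> ((r^2) \<cdot> (rootE r l j \<otimes> rootE r i (l - 1)))))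
       \<and> (\<forall>i l j. 1 \<le> i \<and> i < l \<and> l < j \<and> j \<le> n \<longrightarrow>
            eqU r s n (rootEp r s n i j)
              ((rootE r i (l - 1) \<otimes> rootEp r s n l j) \<ominus> ((r^2) \<cdot> (rootEp r s n l j \<otimes> rootE r i (l - 1)))))"
proof (intro conjI allI impI)
  fix i j k l :: nat
  assume h: "1 \<le> i \<and> i \<le> j \<and> j + 1 < k \<and> k \<le> l \<and> l \<le> n"
  show "eqU r s n (rootE r i j \<otimes> rootE r k l) (rootE r k l \<otimes> rootE r i j)"
    using gin_rootE[of i j r] gin_rootE[of k l r] h
    by (intro comm_sets[where S="{i..j}" and T="{k..l}"]) (auto intro!: serre_comm)
next
  fix i j k l :: nat
  assume h: "1 \<le> i \<and> i \<le> j \<and> j + 1 < k \<and> k < l \<and> l \<le> n"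
  have g: "gin {k..n} (rootEp r s n k l)" unfolding rootEp_def using h by (intro gin_Epaux) auto
  show "eqU r s n (rootE r i j \<otimes> rootEp r s n k l) (rootEp r s n k l \<otimes> rootE r i j)"
    using gin_rootE[of i j r] g h
    by (intro comm_sets[where S="{i..j}" and T="{k..n}"]) (auto intro!: serre_comm)
next
  fix i l j :: nat
  assume h: "1 \<le> i \<and> i < l \<and> l \<le> j \<and> j \<le> n"
  then show "eqU r s n (rootE r i j)
              ((rootE r i (l - 1) \<otimes> rootE r l j) \<ominus> ((r^2) \<cdot> (rootE r l j \<otimes> rootE r i (l - 1))))"
    by (intro part3) auto
next
  fix i l j :: nat
  assume h: "1 \<le> i \<and> i < l \<and> l < j \<and> j \<le> n"
  then show "eqU r s n (rootEp r s n i j)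
              ((rootE r i (l - 1) \<otimes> rootEp r s n l j) \<ominus> ((r^2) \<cdot> (rootEp r s n l j \<otimes> rootE r i (l - 1))))"
    unfolding rootEp_def by (intro part4) auto
qed

end
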